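(* Let $\Phi$ be an $N\times\mathcal{C}$ complex matrix with no repeated columns which is $\eta$-StRIP-able with $\eta>1/2$, let $\epsilon>0$, and assume $k<\epsilon(\mathcal{C}-1)+1$ and $N=O\left(\left(\frac{k\log\mathcal{C}}{\epsilon^2}\right)^{1/\eta}\right)$; let $\delta:=2\exp\left[-\frac{[\epsilon-(k-1)/(\mathcal{C}-1)]^2N^{\eta}}{8k}\right]$. Let $w$ be a fixed column index of $\Phi$, and let $\kappa=\{\kappa_1,\dots,\kappa_k\}$ be the first $k$ elements of a uniformly random permutation of $\{1,\dots,\mathcal{C}\}\setminus\{w\}$. Then $$\mathbb{E}\left[\left\|\frac{1}{\sqrt N}\Phi_\kappa^{\dagger}\frac{1}{\sqrt N}\varphi_w\right\|^2\right]=\frac{k}{N}\,\frac{\mathcal{C}-N}{\mathcal{C}-1},$$ where the expectation is with respect to the choice of $\kappa$.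
   Context: Columns of $\Phi$ are denoted $\varphi_1,\dots,\varphi_{\mathcal{C}}$, with entries $\varphi_j(x)$, $x=1,\dots,N$. For $0<\eta\le 1$, $\Phi$ is called $\eta$-StRIP-able if: (St1) $\sum_{j=1}^{\mathcal{C}}\varphi_j(x)\overline{\varphi_j(y)}=0$ for $x\neq y$, and $\sum_{j=1}^{\mathcal{C}}\varphi_j(x)=0$ for all $x$; (St2) the columns form a group under pointwise multiplication, whose identity is the all-ones column $\varphi_1$; (St3) for all $j\in\{2,\dots,\mathcal{C}\}$, $\left|\sum_x\varphi_j(x)\right|^2\leq N^{2-\eta}$. For a set $\kappa$ of column indices, $\Phi_\kappa$ is the $N\times|\kappa|$ submatrix of the columns indexed by $\kappa$, and $\Phi_\kappa^\dagger$ its conjugate transpose; $\|\cdot\|$ is the Euclidean norm. *)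

theory Defs
  imports "HOL-Probability.Probability" "HOL-Combinatorics.Multiset_Permutations"
begin

(* An N x C complex matrix is represented by Phi :: nat => nat => complex,
   with entry Phi x j = phi_j(x), rows x in {1..N}, columns j in {1..C}. *)

definition no_repeated_columns :: "nat \<Rightarrow> nat \<Rightarrow> (nat \<Rightarrow> nat \<Rightarrow> complex) \<Rightarrow> bool" where
  "no_repeated_columns N C Phi \<longleftrightarrow>
     (\<forall>i\<in>{1..C}. \<forall>j\<in>{1..C}. i \<noteq> j \<longrightarrow> (\<exists>x\<in>{1..N}. Phi x i \<noteq> Phi x j))"

definition St1 :: "nat \<Rightarrow> nat \<Rightarrow> (nat \<Rightarrow> nat \<Rightarrow> complex) \<Rightarrow> bool" where
  "St1 N C Phi \<longleftrightarrow>
     (\<forall>x\<in>{1..N}. \<forall>y\<in>{1..N}. x \<noteq> y \<longrightarrow> (\<Sum>j=1..C. Phi x j * cnj (Phi y j)) = 0) \<and>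
     (\<forall>x\<in>{1..N}. (\<Sum>j=1..C. Phi x j) = 0)"

(* (St2): the columns form a group under pointwise multiplication whose identity
   is the all-ones column phi_1 (associativity is automatic). *)
definition St2 :: "nat \<Rightarrow> nat \<Rightarrow> (nat \<Rightarrow> nat \<Rightarrow> complex) \<Rightarrow> bool" where
  "St2 N C Phi \<longleftrightarrow>
     1 \<le> C \<and>
     (\<forall>x\<in>{1..N}. Phi x 1 = 1) \<and>
     (\<forall>i\<in>{1..C}. \<forall>j\<in>{1..C}. \<exists>l\<in>{1..C}. \<forall>x\<in>{1..N}. Phi x i * Phi x j = Phi x l) \<and>
     (\<forall>i\<in>{1..C}. \<exists>l\<in>{1..C}. \<forall>x\<in>{1..N}. Phi x i * Phi x l = 1)"

definition St3 :: "real \<Rightarrow> nat \<Rightarrow> nat \<Rightarrow> (nat \<Rightarrow> nat \<Rightarrow> complex) \<Rightarrow> bool" where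
  "St3 \<eta> N C Phi \<longleftrightarrow>
     (\<forall>j\<in>{2..C}. (cmod (\<Sum>x=1..N. Phi x j))\<^sup>2 \<le> real N powr (2 - \<eta>))"

definition StRIP_able :: "real \<Rightarrow> nat \<Rightarrow> nat \<Rightarrow> (nat \<Rightarrow> nat \<Rightarrow> complex) \<Rightarrow> bool" where
  "StRIP_able \<eta> N C Phi \<longleftrightarrow> 0 < \<eta> \<and> \<eta> \<le> 1 \<and> St1 N C Phi \<and> St2 N C Phi \<and> St3 \<eta> N C Phi"

(* || (1/sqrt N) Phi_kappa^dagger (1/sqrt N) phi_w ||^2, where kappa is given as the
   list [kappa_1,...,kappa_k]; the i-th entry of Phi_kappa^dagger phi_w is
   sum_x conj(phi_{kappa_i}(x)) phi_w(x). *)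
definition sub_gram_norm_sq :: "nat \<Rightarrow> (nat \<Rightarrow> nat \<Rightarrow> complex) \<Rightarrow> nat list \<Rightarrow> nat \<Rightarrow> real" where
  "sub_gram_norm_sq N Phi \<kappa> w =
     (\<Sum>i<length \<kappa>. (cmod ((1 / sqrt (real N)) * (1 / sqrt (real N)) *
         (\<Sum>x=1..N. cnj (Phi x (\<kappa> ! i)) * Phi x w)))\<^sup>2)"

end

theory Submission
  imports Defs begin


lemma unit_mod:
  assumes "St2 N C Phi" "x \<in> {1..N}" "j \<in> {1..C}"
  shows "cmod (Phi x j) = 1"
proof -
  define a where "a = Phi x j"
  define S where "S = (\<lambda>l. Phi x l) ` {1..C}"
  have pow: "a ^ n \<in> S" for n
  proof (induction n)
    case 0
    then show ?case using assms unfolding St2_def S_def by force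
  next
    case (Suc n)
    then obtain l where l: "l \<in> {1..C}" "a ^ n = Phi x l" unfolding S_def by auto
    then obtain l' where "l' \<in> {1..C}" "Phi x j * Phi x l = Phi x l'"
      using assms unfolding St2_def by blast
    then show ?case using l unfolding S_def a_def by auto
  qed
  have "\<not> inj (\<lambda>n::nat. a ^ n)"
  proof
    assume "inj (\<lambda>n::nat. a ^ n)"
    then have "infinite (range (\<lambda>n::nat. a ^ n))" by (rule range_inj_infinite)
    moreover have "range (\<lambda>n::nat. a ^ n) \<subseteq> S" using pow by auto
    moreover have "finite S" unfolding S_def by simp
    ultimately show False using finite_subset by blast
  qed
  then obtain m n :: nat where mn: "m < n" "a ^ m = a ^ n"
    unfolding inj_def by (metis linorder_neqE_nat)
  have "a \<noteq> 0" using assms unfolding St2_def a_def by force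
  have "a ^ m * a ^ (n - m) = a ^ n" using mn by (metis le_add_diff_inverse less_imp_le power_add)
  then have "a ^ m * a ^ (n - m) = a ^ m * 1" using mn by simp
  then have "a ^ (n - m) = 1" using \<open>a \<noteq> 0\<close> by (metis mult_left_cancel power_not_zero)
  then show ?thesis using power_eq_1_iff mn a_def by fastforce
qed

lemma count_eq:
  assumes "finite A" "a \<in> A" "b \<in> A" "i < card A"
  shows "card {\<sigma> \<in> permutations_of_set A. \<sigma> ! i = a} \<le> card {\<sigma> \<in> permutations_of_set A. \<sigma> ! i = b}"
proof -
  define t where "t = Transposition.transpose a b"
  have injt: "inj t" unfolding t_def by simp
  have "inj_on (map t) {\<sigma> \<in> permutations_of_set A. \<sigma> ! i = a}"
    using injt by (meson inj_mapI inj_on_subset subset_UNIV)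
  moreover have "map t ` {\<sigma> \<in> permutations_of_set A. \<sigma> ! i = a} \<subseteq> {\<sigma> \<in> permutations_of_set A. \<sigma> ! i = b}"
  proof
    fix \<tau> assume "\<tau> \<in> map t ` {\<sigma> \<in> permutations_of_set A. \<sigma> ! i = a}"
    then obtain \<sigma> where s: "\<tau> = map t \<sigma>" "set \<sigma> = A" "distinct \<sigma>" "\<sigma> ! i = a"
      unfolding permutations_of_set_def by auto
    have "i < length \<sigma>"
      using s assms distinct_card by metis
    have "set \<tau> = A" using s assms unfolding t_def
      by simp
    moreover have "distinct \<tau>" using s by (simp add: distinct_map inj_on_subset[OF injt subset_UNIV])
    moreover have "\<tau> ! i = b" using s \<open>i < length \<sigma>\<close> t_def by simp
    ultimately show "\<tau> \<in> {\<sigma> \<in> permutations_of_set A. \<sigma> ! i = b}"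
      unfolding permutations_of_set_def by simp
  qed
  moreover have "finite (permutations_of_set A)" using assms by simp
  ultimately show ?thesis by (simp add: card_inj_on_le)
qed

lemma sum_pos:
  fixes f :: "'a \<Rightarrow> real"
  assumes "finite A" "i < card A"
  shows "(\<Sum>\<sigma>\<in>permutations_of_set A. f (\<sigma> ! i)) * card A = card (permutations_of_set A) * (\<Sum>a\<in>A. f a)"
proof -
  define P where "P = permutations_of_set A"
  have fP: "finite P" unfolding P_def using assms by simp
  have A0: "A \<noteq> {}" using assms by auto
  then obtain a0 where a0: "a0 \<in> A" by auto
  define c where "c = card {\<sigma> \<in> P. \<sigma> ! i = a0}"
  have cc: "card {\<sigma> \<in> P. \<sigma> ! i = a} = c" if "a \<in> A" for a
    unfolding c_def P_def using count_eq[OF assms(1) that a0 assms(2)] count_eq[OF assms(1) a0 that assms(2)]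
    by simp
  have img: "(\<lambda>\<sigma>. \<sigma> ! i) ` P \<subseteq> A"
  proof
    fix y assume "y \<in> (\<lambda>\<sigma>. \<sigma> ! i) ` P"
    then obtain \<sigma> where "\<sigma> \<in> P" "y = \<sigma> ! i" by auto
    then show "y \<in> A" using assms unfolding P_def permutations_of_set_def
      by (metis (mono_tags, lifting) distinct_card mem_Collect_eq nth_mem)
  qed
  have "(\<Sum>\<sigma>\<in>P. f (\<sigma> ! i)) = (\<Sum>a\<in>A. \<Sum>\<sigma>\<in>{\<sigma> \<in> P. \<sigma> ! i = a}. f (\<sigma> ! i))"
    using sum.group[OF fP assms(1) img, of "\<lambda>\<sigma>. f (\<sigma> ! i)"] by simp
  also have "\<dots> = (\<Sum>a\<in>A. c * f a)"
    by (rule sum.cong) (auto simp: cc)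
  finally have 1: "(\<Sum>\<sigma>\<in>P. f (\<sigma> ! i)) = c * (\<Sum>a\<in>A. f a)"
    by (simp add: sum_distrib_left)
  have "card P = (\<Sum>a\<in>A. card {\<sigma> \<in> P. \<sigma> ! i = a})"
    using sum.group[OF fP assms(1) img, of "\<lambda>_. (1::nat)"] by simp
  also have "\<dots> = card A * c" by (simp add: cc)
  finally show ?thesis using 1 unfolding P_def by simp
qed


lemma unit_prod:
  assumes "St2 N C Phi" "x \<in> {1..N}" "j \<in> {1..C}"
  shows "Phi x j * cnj (Phi x j) = 1"
  using complex_norm_square[of "Phi x j"] unit_mod[OF assms] by simp

lemma inner_sum:
  assumes "St1 N C Phi" "St2 N C Phi" "x \<in> {1..N}" "y \<in> {1..N}"
  shows "(\<Sum>a=1..C. Phi y a * cnj (Phi x a)) = (if y = x then of_nat C else 0)"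
proof (cases "y = x")
  case True
  then show ?thesis using unit_prod[OF assms(2) assms(3)] by simp
next
  case False
  then show ?thesis using assms unfolding St1_def by auto
qed

lemma gram_sum:
  assumes "St1 N C Phi" "St2 N C Phi" "w \<in> {1..C}"
  shows "(\<Sum>a=1..C. (\<Sum>x=1..N. cnj (Phi x a) * Phi x w) * cnj (\<Sum>x=1..N. cnj (Phi x a) * Phi x w))
       = of_nat (C * N)"
proof -
  have "(\<Sum>a=1..C. (\<Sum>x=1..N. cnj (Phi x a) * Phi x w) * cnj (\<Sum>x=1..N. cnj (Phi x a) * Phi x w))
      = (\<Sum>a=1..C. \<Sum>x=1..N. \<Sum>y=1..N. (Phi x w * cnj (Phi y w)) * (Phi y a * cnj (Phi x a)))"
    unfolding cnj_sum sum_product by (simp add: mult_ac)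
  also have "\<dots> = (\<Sum>x=1..N. \<Sum>y=1..N. \<Sum>a=1..C. (Phi x w * cnj (Phi y w)) * (Phi y a * cnj (Phi x a)))"
    by (rule trans[OF sum.swap], rule sum.cong[OF refl], rule sum.swap)
  also have "\<dots> = (\<Sum>x=1..N. \<Sum>y=1..N. (Phi x w * cnj (Phi y w)) * (if y = x then of_nat C else 0))"
  proof (intro sum.cong refl)
    fix x y assume "x \<in> {1..N}" "y \<in> {1..N}"
    show "(\<Sum>a=1..C. (Phi x w * cnj (Phi y w)) * (Phi y a * cnj (Phi x a))) =
         (Phi x w * cnj (Phi y w)) * (if y = x then of_nat C else 0)"
      by (subst sum_distrib_left[symmetric], subst inner_sum[OF assms(1,2) \<open>x \<in> _\<close> \<open>y \<in> _\<close>]) (rule refl)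
  qed
  also have "\<dots> = (\<Sum>x=1..N. of_nat C)"
    by (intro sum.cong refl) (simp add: unit_prod[OF assms(2) _ assms(3)] if_distrib cong: if_cong)
  finally show ?thesis by simp
qed


theorem lemma3p10:
  fixes N C k w :: nat and Phi :: "nat \<Rightarrow> nat \<Rightarrow> complex" and \<eta> \<epsilon> \<delta> :: real
  assumes "1 \<le> N" and "2 \<le> C"
    and "no_repeated_columns N C Phi"
    and "StRIP_able \<eta> N C Phi" and "\<eta> > 1/2"
    and "\<epsilon> > 0"
    and "real k < \<epsilon> * (real C - 1) + 1"
    and "k \<le> C - 1"
    and "\<delta> = 2 * exp (- ((\<epsilon> - (real k - 1) / (real C - 1))\<^sup>2 * real N powr \<eta>) / (8 * real k))"
    and "w \<in> {1..C}"
  shows "measure_pmf.expectation (pmf_of_set (permutations_of_set ({1..C} - {w})))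
           (\<lambda>\<sigma>. sub_gram_norm_sq N Phi (take k \<sigma>) w)
         = real k / real N * ((real C - real N) / (real C - 1))"
proof -
  have S1: "St1 N C Phi" and S2: "St2 N C Phi" using assms(4) unfolding StRIP_able_def by auto
  define A where "A = {1..C} - {w}"
  define P where "P = permutations_of_set A"
  define G where "G a = (\<Sum>x=1..N. cnj (Phi x a) * Phi x w)" for a
  define f where "f a = (cmod ((1 / sqrt (real N)) * (1 / sqrt (real N)) * G a))\<^sup>2" for a
  have fA: "finite A" unfolding A_def by simp
  have cardA: "card A = C - 1" unfolding A_def using assms(10) by simp
  have fP: "finite P" unfolding P_def using fA by simp
  have cardP: "card P > 0" unfolding P_def using fA by simp
  then have Pne: "P \<noteq> {}" by auto
  have len: "length \<sigma> = C - 1" if "\<sigma> \<in> P" for \<sigma>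
    using that cardA unfolding P_def permutations_of_set_def by (auto simp: distinct_card)
  have sub: "sub_gram_norm_sq N Phi (take k \<sigma>) w = (\<Sum>i<k. f (\<sigma> ! i))" if "\<sigma> \<in> P" for \<sigma>
    using len[OF that] assms(8) unfolding sub_gram_norm_sq_def f_def G_def by simp
  have E: "measure_pmf.expectation (pmf_of_set P) (\<lambda>\<sigma>. sub_gram_norm_sq N Phi (take k \<sigma>) w)
      = (\<Sum>\<sigma>\<in>P. \<Sum>i<k. f (\<sigma> ! i)) / card P"
    using integral_pmf_of_set[OF Pne fP] sub by simp
  have "(\<Sum>\<sigma>\<in>P. \<Sum>i<k. f (\<sigma> ! i)) = (\<Sum>i<k. \<Sum>\<sigma>\<in>P. f (\<sigma> ! i))"
    by (rule sum.swap)
  also have "\<dots> = (\<Sum>i<k. card P * (\<Sum>a\<in>A. f a) / card A)"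
  proof (rule sum.cong[OF refl])
    fix i assume "i \<in> {..<k}"
    then have "i < card A" using cardA assms(8) by auto
    from sum_pos[OF fA this, of f] cardA assms(2)
    show "(\<Sum>\<sigma>\<in>P. f (\<sigma> ! i)) = card P * (\<Sum>a\<in>A. f a) / card A"
      unfolding P_def by (simp add: field_simps)
  qed
  finally have E2: "measure_pmf.expectation (pmf_of_set P) (\<lambda>\<sigma>. sub_gram_norm_sq N Phi (take k \<sigma>) w)
      = k * (\<Sum>a\<in>A. f a) / (real C - 1)"
    using E cardP cardA assms(2) by (simp add: of_nat_diff)
  have fG: "f a = (cmod (G a))\<^sup>2 / (real N)\<^sup>2" for a
    using assms(1) unfolding f_def by (simp add: norm_mult norm_divide power_mult_distrib power2_eq_square field_simps)
  have "of_real (\<Sum>a=1..C. (cmod (G a))\<^sup>2) = (\<Sum>a=1..C. G a * cnj (G a))"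
    unfolding of_real_sum by (rule sum.cong[OF refl]) (rule complex_norm_square)
  also have "\<dots> = of_nat (C * N)" unfolding G_def by (rule gram_sum[OF S1 S2 assms(10)])
  finally have tot: "(\<Sum>a=1..C. (cmod (G a))\<^sup>2) = real C * real N"
    by (metis of_nat_mult of_real_eq_iff of_real_of_nat_eq)
  have "G w = (\<Sum>x=1..N. 1)" unfolding G_def
    by (rule sum.cong[OF refl]) (metis mult.commute unit_prod[OF S2 _ assms(10)])
  then have Gw: "cmod (G w) = real N" by simp
  have "(\<Sum>a\<in>A. f a) = (\<Sum>a=1..C. f a) - f w"
    unfolding A_def using assms(10) by (simp add: sum_diff1)
  also have "\<dots> = (real C * real N - (real N)\<^sup>2) / (real N)\<^sup>2"
    using tot Gw by (simp add: fG sum_divide_distrib[symmetric] diff_divide_distrib)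
  also have "\<dots> = ((real C - real N) * real N) / (real N * real N)"
    by (simp add: power2_eq_square left_diff_distrib)
  also have "\<dots> = (real C - real N) / real N"
    using assms(1) by simp
  finally have SA: "(\<Sum>a\<in>A. f a) = (real C - real N) / real N" .
  have "real k * ((real C - real N) / real N) / (real C - 1) = real k / real N * ((real C - real N) / (real C - 1))"
    by (simp add: divide_simps mult_ac)
  moreover have "measure_pmf.expectation (pmf_of_set P) (\<lambda>\<sigma>. sub_gram_norm_sq N Phi (take k \<sigma>) w)
      = real k * ((real C - real N) / real N) / (real C - 1)"
    using E2 SA by simp
  ultimately show ?thesis unfolding P_def A_def by simp
qed

end
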